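(* Let $k\ge 2$ be an integer, $0<\bar r\le k$ a residue, and $\mathcal{A}$ the alphabet of all positive integers congruent to $\bar r \pmod k$. Suppose that for every residue $r \pmod k$ there exists a matrix $\begin{pmatrix}a&b\\c&d\end{pmatrix}\in\mathcal{G}_{\mathcal{A}}$ with $\gcd(c,k)=1$ and $d\equiv r\pmod k$. Then for every $n\ge1$ we have $\mathfrak{D}_{\mathcal{A}}\bmod k^n=\mathbb{Z}/k^n\mathbb{Z}$.
   Context: For $a\in\mathbb{N}$ let $\gamma_a=\begin{pmatrix}0&1\\1&a\end{pmatrix}$ and let $\mathcal{G}_{\mathcal{A}}$ be the semigroup generated by $\gamma_a$, $a\in\mathcal{A}$. $\mathfrak{D}_{\mathcal{A}}=\{\langle \gamma e_2,e_2\rangle:\gamma\in\mathcal{G}_{\mathcal{A}}\}$ is the set of lower-right entries of elements of $\mathcal{G}_{\mathcal{A}}$. *)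

theory Defs
  imports Main "HOL-Number_Theory.Cong"
begin

text \<open>2x2 integer matrices, represented as (a, b, c, d) for the matrix with rows (a b) and (c d).\<close>
type_synonym mat2 = "int \<times> int \<times> int \<times> int"

fun mmul2 :: "mat2 \<Rightarrow> mat2 \<Rightarrow> mat2" where
  "mmul2 (a, b, c, d) (a', b', c', d') =
     (a * a' + b * c', a * b' + b * d', c * a' + d * c', c * b' + d * d')"

definition gamma :: "int \<Rightarrow> mat2" where
  "gamma a = (0, 1, 1, a)"

inductive_set semigrp :: "int set \<Rightarrow> mat2 set" for A :: "int set" where
  gen: "a \<in> A \<Longrightarrow> gamma a \<in> semigrp A"
| mul: "g \<in> semigrp A \<Longrightarrow> h \<in> semigrp A \<Longrightarrow> mmul2 g h \<in> semigrp A"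

definition Dset :: "int set \<Rightarrow> int set" where
  "Dset A = {d. \<exists>a b c. (a, b, c, d) \<in> semigrp A}"

end

theory Submission
  imports Defs
begin

lemma mmul2_assoc: "mmul2 (mmul2 f g) h = mmul2 f (mmul2 g h)"
  by (cases f; cases g; cases h) (simp add: algebra_simps)

lemma semigrp_last:
  assumes "g \<in> semigrp A"
  shows "(\<exists>y\<in>A. g = gamma y) \<or> (\<exists>X\<in>semigrp A. \<exists>y\<in>A. g = mmul2 X (gamma y))"
  using assms
proof (induction rule: semigrp.induct)
  case (gen a) then show ?case by blast
next
  case (mul g h)
  from mul.IH(2) show ?case
  proof
    assume "\<exists>y\<in>A. h = gamma y"
    then show ?thesis using mul.hyps(1) by blast
  next
    assume "\<exists>X\<in>semigrp A. \<exists>y\<in>A. h = mmul2 X (gamma y)"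
    then obtain X y where X: "X \<in> semigrp A" "y \<in> A" "h = mmul2 X (gamma y)" by blast
    have "mmul2 g h = mmul2 (mmul2 g X) (gamma y)" using X(3) by (simp add: mmul2_assoc)
    moreover have "mmul2 g X \<in> semigrp A" using mul.hyps(1) X(1) by (rule semigrp.mul)
    ultimately show ?thesis using X(2) by blast
  qed
qed

lemma key:
  fixes k s u y z :: int and n :: nat
  assumes k: "k \<ge> 2" and n: "n \<ge> 1" and cop: "coprime u k" and yc: "[s + u*y = z] (mod k)"
  shows "\<exists>m::int. m \<ge> 0 \<and> [s + u*(y + k*m) = z] (mod k^n)"
proof -
  obtain w where w: "z - (s + u*y) = k*w"
    using yc by (metis cong_iff_dvd_diff cong_sym dvdE)
  have "coprime u (k^(n-1))" using cop by simp
  then obtain v where v: "[u*v = 1] (mod k^(n-1))" using cong_solve_coprime_int by blast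
  define m where "m = (v*w) mod k^(n-1)"
  have kp: "k^(n-1) > 0" using k by simp
  have m0: "m \<ge> 0" using kp m_def by simp
  have "[m = v*w] (mod k^(n-1))" unfolding m_def by (simp add: cong_def)
  then have "[u*m = u*(v*w)] (mod k^(n-1))" by (simp add: cong_scalar_left)
  moreover have "[u*(v*w) = 1*w] (mod k^(n-1))"
    using cong_scalar_right[OF v, of w] by (simp add: mult.assoc)
  ultimately have "[u*m = w] (mod k^(n-1))" using cong_trans by fastforce
  then have "k^(n-1) dvd (u*m - w)" by (simp add: cong_iff_dvd_diff)
  then have "k * k^(n-1) dvd k*(u*m - w)" by (rule mult_dvd_mono[OF dvd_refl])
  moreover have "k * k^(n-1) = k^n" using n by (cases n) auto
  moreover have "s + u*(y + k*m) - z = k*(u*m - w)" using w by (simp add: algebra_simps)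
  ultimately have "k^n dvd (s + u*(y + k*m) - z)" by metis
  then show ?thesis using m0 by (auto simp: cong_iff_dvd_diff)
qed

theorem lemmaB9:
  fixes k rbar :: int
  assumes "k \<ge> 2"
    and "0 < rbar" and "rbar \<le> k"
    and "\<forall>r. \<exists>a b c d. (a, b, c, d) \<in> semigrp {x. x > 0 \<and> [x = rbar] (mod k)}
                          \<and> gcd c k = 1 \<and> [d = r] (mod k)"
  shows "\<forall>n::nat. n \<ge> 1 \<longrightarrow>
           (\<forall>x. \<exists>d \<in> Dset {x. x > 0 \<and> [x = rbar] (mod k)}. [d = x] (mod k ^ n))"
proof (intro allI impI)
  fix n :: nat and z :: int
  assume n: "n \<ge> 1"
  define A where "A = {x. x > 0 \<and> [x = rbar] (mod k)}"
  have gen: "\<exists>d \<in> Dset A. [d = z] (mod k ^ n)"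
    if cop: "coprime u k" and yA: "y \<in> A" and yc: "[s + u*y = z] (mod k)"
      and inD: "\<And>x. x \<in> A \<Longrightarrow> s + u*x \<in> Dset A" for s u y
  proof -
    obtain m where m: "m \<ge> 0" "[s + u*(y + k*m) = z] (mod k^n)"
      using key[OF assms(1) n cop yc] by blast
    have "y + k*m \<in> A"
    proof -
      have "y > 0" "[y = rbar] (mod k)" using yA A_def by auto
      moreover have "k*m \<ge> 0" using m(1) assms(1) by simp
      moreover have "[y + k*m = y] (mod k)" by (simp add: cong_def)
      ultimately show ?thesis unfolding A_def using cong_trans by fastforce
    qed
    then show ?thesis using inD m(2) by blast
  qed
  obtain a b c d where g: "(a, b, c, d) \<in> semigrp A" "gcd c k = 1" "[d = z] (mod k)"
    using spec[OF assms(4), of z] A_def by metis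
  from semigrp_last[OF g(1)] have "\<exists>d \<in> Dset A. [d = z] (mod k ^ n)"
  proof
    assume "\<exists>y\<in>A. (a, b, c, d) = gamma y"
    then obtain y where y: "y \<in> A" "(a, b, c, d) = gamma y" by blast
    then have "d = y" by (simp add: gamma_def)
    show ?thesis
    proof (rule gen[of 1 y 0])
      show "coprime (1::int) k" by simp
      show "y \<in> A" by fact
      show "[0 + 1 * y = z] (mod k)" using g(3) \<open>d = y\<close> by simp
      fix x assume "x \<in> A"
      then have "gamma x \<in> semigrp A" by (rule semigrp.gen)
      then show "0 + 1 * x \<in> Dset A" unfolding Dset_def gamma_def by auto
    qed
  next
    assume "\<exists>X\<in>semigrp A. \<exists>y\<in>A. (a, b, c, d) = mmul2 X (gamma y)"
    then obtain p q s u y where X: "(p, q, s, u) \<in> semigrp A" "y \<in> A"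
      "(a, b, c, d) = mmul2 (p, q, s, u) (gamma y)" by (metis prod_cases4)
    then have cd: "c = u" "d = s + u*y" by (simp_all add: gamma_def)
    show ?thesis
    proof (rule gen[of u y s])
      show "coprime u k" using g(2) cd by (simp add: coprime_iff_gcd_eq_1)
      show "y \<in> A" by fact
      show "[s + u * y = z] (mod k)" using g(3) cd by simp
      fix x assume "x \<in> A"
      then have "gamma x \<in> semigrp A" by (rule semigrp.gen)
      then have "mmul2 (p, q, s, u) (gamma x) \<in> semigrp A" using X(1) semigrp.mul by blast
      then show "s + u * x \<in> Dset A" unfolding Dset_def gamma_def by auto
    qed
  qed
  then show "\<exists>d \<in> Dset {x. x > 0 \<and> [x = rbar] (mod k)}. [d = z] (mod k ^ n)"
    by (simp add: A_def)
qed

end
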